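(* Let $d\le3$. For all $E>0$ and $\tau\in[0,4-d)$ there exists a constant $C_{E,\tau}$, uniformly bounded for $E$ in compact subsets of $(0,\infty)$, such that for all $L\ge1$ and all $\eta>0$, $$\int_{\Lambda_L^*}\frac{\langle a\rangle^\tau}{|a^2-E-i\eta|^2}da\le C_{E,\tau}(1+\eta^{-2}).$$
   Context: $\Lambda_L=[-L/2,L/2)^d$, $\Lambda_L^*=(\frac1L\mathbb Z)^d$, $\int_{\Lambda_L^*}g(a)da:=|\Lambda_L|^{-1}\sum_{a\in\Lambda_L^*}g(a)$; $a^2=|a|^2$ and $\langle a\rangle=(1+|a|^2)^{1/2}$. *)

theory Defs
  imports "HOL-Analysis.Analysis"
begin

text \<open>The dual lattice point k/L of the lattice (1/L Z)^d, with k in Z^d.\<close>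
definition dual_pt :: "real \<Rightarrow> int ^ 'n \<Rightarrow> real ^ 'n" where
  "dual_pt L k = (\<chi> i. of_int (k $ i) / L)"

definition jbr :: "real ^ 'n \<Rightarrow> real" where
  "jbr a = sqrt (1 + (norm a)\<^sup>2)"

definition integrand22 :: "real \<Rightarrow> real \<Rightarrow> real \<Rightarrow> real ^ 'n \<Rightarrow> real" where
  "integrand22 E \<tau> \<eta> a =
     jbr a powr \<tau> / (cmod (complex_of_real ((norm a)\<^sup>2) - complex_of_real E - \<i> * complex_of_real \<eta>))\<^sup>2"

end

theory Submission
  imports Defs
begin


lemma bern:
  fixes q u :: real
  assumes "q > 0" "0 \<le> u" "u < 1"
  shows "1 + q*u \<le> (1-u) powr (-q)"
proof -
  have "ln (1-u) \<le> -u" using ln_le_minus_one[of "1-u"] assms by simp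
  hence "q * ln (1-u) \<le> q * (-u)" using assms by (intro mult_left_mono) auto
  hence a: "q*u \<le> -q * ln (1-u)" by simp
  have pos: "0 < 1+q*u" using assms by (simp add: add_pos_nonneg)
  have b: "ln (1+q*u) \<le> q*u" using ln_le_minus_one[OF pos] by simp
  have "1 + q*u = exp (ln (1+q*u))" using pos by simp
  also have "\<dots> \<le> exp (-q * ln (1-u))" using a b by simp
  also have "\<dots> = (1-u) powr (-q)" using assms by (simp add: powr_def)
  finally show ?thesis .
qed

definition FF :: "real \<Rightarrow> real \<Rightarrow> real" where
  "FF p y = (1+y) powr (1-p) / (p-1)"

lemma FF_nonneg: "p > 1 \<Longrightarrow> y \<ge> 0 \<Longrightarrow> FF p y \<ge> 0"
  unfolding FF_def by simp

lemma step:
  fixes p x \<delta> :: real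
  assumes "p > 1" "x \<ge> 0" "\<delta> > 0"
  shows "\<delta> * (1+x+\<delta>) powr (-p) \<le> FF p x - FF p (x+\<delta>)"
proof -
  define y where "y = 1+x+\<delta>"
  define u where "u = \<delta>/y"
  have y: "y > 0" using assms unfolding y_def by simp
  have u: "0 \<le> u" "u < 1" using assms y unfolding u_def y_def by auto
  have e: "1 + x = (1-u) * y" using y unfolding u_def y_def by (simp add: field_simps)
  have "(1+x) powr (1-p) = (1-u) powr (1-p) * y powr (1-p)"
    using e u y by (simp add: powr_mult)
  moreover have "(1-u) powr (1-p) \<ge> 1 + (p-1)*u" using bern[of "p-1" u] u assms by simp
  ultimately have "(1+x) powr (1-p) \<ge> (1 + (p-1)*u) * y powr (1-p)"
    by (simp add: mult_right_mono)
  hence "FF p x \<ge> (1 + (p-1)*u) * y powr (1-p) / (p-1)"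
    unfolding FF_def using assms by (simp add: divide_right_mono)
  also have "(1 + (p-1)*u) * y powr (1-p) / (p-1) = FF p (x+\<delta>) + u * y powr (1-p)"
    unfolding FF_def y_def using assms by (simp add: field_simps add_ac)
  also have "u * y powr (1-p) = \<delta> * y powr (-p)"
  proof -
    have "y powr (1-p) = y powr (1 + -p)" by simp
    also have "\<dots> = y * y powr (-p)" using y powr_add[of y 1 "-p"] by simp
    finally have "y powr (1-p) = y * y powr (-p)" .
    thus ?thesis unfolding u_def using y by simp
  qed
  finally show ?thesis unfolding y_def by simp
qed

definition psi :: "real \<Rightarrow> real \<Rightarrow> int \<Rightarrow> real" where
  "psi L p j = (1 + \<bar>real_of_int j\<bar> / L) powr (-p)"

lemma psi_neg: "psi L p (-j) = psi L p j" by (simp add: psi_def)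

lemma oneD_aux:
  assumes "L \<ge> 1" "p > 1"
  shows "(\<Sum>j\<in>{-int N..int N}. psi L p j) \<le> L + 2*L*(FF p 0 - FF p (real N / L))"
proof (induction N)
  case 0
  then show ?case using assms by (simp add: psi_def)
next
  case (Suc N)
  have set: "{-int (Suc N)..int (Suc N)} = insert (-int (Suc N)) (insert (int (Suc N)) {-int N..int N})"
    by auto
  have "(\<Sum>j\<in>{-int (Suc N)..int (Suc N)}. psi L p j) = (\<Sum>j\<in>{-int N..int N}. psi L p j) + 2 * psi L p (int (Suc N))"
    unfolding set using psi_neg[of L p "int (Suc N)"] by (simp del: of_nat_Suc)
  also have "psi L p (int (Suc N)) = (1 + real N / L + 1/L) powr (-p)"
    using assms by (simp add: psi_def add_divide_distrib add_ac)
  also have "\<dots> \<le> L * (FF p (real N / L) - FF p (real N / L + 1/L))"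
    using step[of p "real N / L" "1/L"] assms by (simp add: field_simps)
  also have "real N / L + 1/L = real (Suc N) / L"
    by (simp add: add_divide_distrib)
  finally show ?case using Suc by (simp add: algebra_simps)
qed

lemma oneD:
  assumes "L \<ge> 1" "p > 1"
  shows "(\<Sum>j\<in>{-int N..int N}. psi L p j) \<le> L * (1 + 2/(p-1))"
proof -
  have "FF p (real N / L) \<ge> 0" using assms by (intro FF_nonneg) auto
  moreover have "FF p 0 = 1/(p-1)" by (simp add: FF_def)
  moreover have h1: "L * FF p (real N / L) \<ge> 0" using calculation assms by simp
  moreover have h2: "(\<Sum>j\<in>{-int N..int N}. psi L p j) \<le> L + 2*L*FF p 0 - 2*(L*FF p (real N / L))"
    using oneD_aux[OF assms, of N] by (simp add: algebra_simps)
  moreover have "2*L*FF p 0 = 2*L*(1/(p-1))" by (simp add: FF_def)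
  ultimately have "(\<Sum>j\<in>{-int N..int N}. psi L p j) \<le> L + 2*L*(1/(p-1))" by linarith
  thus ?thesis by (simp add: algebra_simps)
qed


lemma cmod_eq: "(cmod (complex_of_real x - complex_of_real E - \<i> * complex_of_real \<eta>))\<^sup>2 = (x-E)\<^sup>2 + \<eta>\<^sup>2"
proof -
  have "complex_of_real x - complex_of_real E - \<i> * complex_of_real \<eta> = Complex (x-E) (-\<eta>)"
    by (simp add: complex_eq_iff)
  thus ?thesis by (simp add: cmod_def)
qed

lemma box_bij: "bij_betw vec_lambda (PiE UNIV (\<lambda>_. S)) {k::'a^'n. \<forall>i. k$i \<in> S}"
  unfolding bij_betw_def
proof
  show "inj_on vec_lambda (PiE UNIV (\<lambda>_. S))" by (auto simp: inj_on_def vec_lambda_inject)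
  show "vec_lambda ` (PiE UNIV (\<lambda>_. S)) = {k::'a^'n. \<forall>i. k$i \<in> S}"
  proof
    show "vec_lambda ` (PiE UNIV (\<lambda>_. S)) \<subseteq> {k::'a^'n. \<forall>i. k$i \<in> S}" by auto
    show "{k::'a^'n. \<forall>i. k$i \<in> S} \<subseteq> vec_lambda ` (PiE UNIV (\<lambda>_. S))"
    proof
      fix k :: "'a^'n" assume "k \<in> {k::'a^'n. \<forall>i. k$i \<in> S}"
      hence "vec_nth k \<in> PiE UNIV (\<lambda>_. S)" by auto
      moreover have "k = vec_lambda (vec_nth k)" by simp
      ultimately show "k \<in> vec_lambda ` (PiE UNIV (\<lambda>_. S))" by blast
    qed
  qed
qed

lemma box_finite: "finite S \<Longrightarrow> finite {k::'a^'n. \<forall>i. k$i \<in> S}"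
  using bij_betw_finite[OF box_bij[of S, where 'n='n]] finite_PiE[of "UNIV::'n set" "\<lambda>_. S"] by simp

lemma box_sum:
  fixes \<phi> :: "'a \<Rightarrow> real"
  assumes "finite S"
  shows "(\<Sum>k\<in>{k::'a^'n. \<forall>i. k$i \<in> S}. \<Prod>i\<in>UNIV. \<phi> (k$i)) = (\<Sum>j\<in>S. \<phi> j) ^ CARD('n)"
proof -
  have "(\<Sum>k\<in>{k::'a^'n. \<forall>i. k$i \<in> S}. \<Prod>i\<in>UNIV. \<phi> (k$i))
      = (\<Sum>g\<in>PiE UNIV (\<lambda>_. S). \<Prod>i\<in>(UNIV::'n set). \<phi> (vec_lambda g $ i))"
    using sum.reindex_bij_betw[OF box_bij[of S, where 'n='n], of "\<lambda>k. \<Prod>i\<in>UNIV. \<phi> (k$i)"] by simp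
  also have "\<dots> = (\<Sum>g\<in>PiE UNIV (\<lambda>_. S). \<Prod>i\<in>(UNIV::'n set). \<phi> (g i))" by simp
  also have "\<dots> = (\<Prod>i\<in>(UNIV::'n set). \<Sum>j\<in>S. \<phi> j)"
    using prod_sum_PiE[of "UNIV::'n set" "\<lambda>_. S" "\<lambda>_ j. \<phi> j"] assms by simp
  also have "\<dots> = (\<Sum>j\<in>S. \<phi> j) ^ CARD('n)" by simp
  finally show ?thesis .
qed

lemma in_box:
  fixes F :: "(int^'n) set"
  assumes "finite F"
  shows "\<exists>N::nat. F \<subseteq> {k. \<forall>i. k$i \<in> {-int N..int N}}"
proof -
  define N where "N = nat (\<Sum>k\<in>F. \<Sum>i\<in>UNIV. \<bar>k$i\<bar>)"
  have "\<bar>k$i\<bar> \<le> int N" if "k \<in> F" for k i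
  proof -
    have "\<bar>k$i\<bar> \<le> (\<Sum>i\<in>UNIV. \<bar>k$i\<bar>)" by (rule member_le_sum) auto
    also have "\<dots> \<le> (\<Sum>k\<in>F. \<Sum>i\<in>UNIV. \<bar>k$i\<bar>)"
      by (rule member_le_sum[where f="\<lambda>k. \<Sum>i\<in>UNIV. \<bar>k$i\<bar>"]) (use that assms in \<open>auto intro: sum_nonneg\<close>)
    finally have "\<bar>k$i\<bar> \<le> (\<Sum>k\<in>F. \<Sum>i\<in>UNIV. \<bar>k$i\<bar>)" .
    moreover have "0 \<le> (\<Sum>k\<in>F. \<Sum>i\<in>UNIV. \<bar>k$i\<bar>)" by (auto intro: sum_nonneg)
    ultimately show ?thesis unfolding N_def by simp
  qed
  note bnd = this
  have "F \<subseteq> {k. \<forall>i. k$i \<in> {-int N..int N}}"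
  proof (intro subsetI CollectI allI)
    fix k i assume "k \<in> F"
    hence "\<bar>k$i\<bar> \<le> int N" by (rule bnd)
    thus "k$i \<in> {-int N..int N}" by (simp add: abs_le_iff)
  qed
  thus ?thesis by blast
qed


definition M1 :: "real \<Rightarrow> real \<Rightarrow> real" where
  "M1 E \<tau> = (3+2*E) powr (\<tau>/2) * (1 + sqrt (2*E+2)) powr (4-\<tau>)"
definition M2 :: "real \<Rightarrow> real" where
  "M2 \<tau> = 4 * 2 powr ((4-\<tau>)/2)"

lemma key:
  fixes n E \<tau> \<eta> :: real
  assumes n: "n \<ge> 0" and E: "E > 0" and t: "0 \<le> \<tau>" "\<tau> < 4" and eta: "\<eta> > 0"
  shows "sqrt (1+n\<^sup>2) powr \<tau> * (1+n) powr (4-\<tau>) \<le> (M1 E \<tau> + M2 \<tau>) * (1 + 1/\<eta>\<^sup>2) * ((n\<^sup>2-E)\<^sup>2+\<eta>\<^sup>2)"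
proof -
  define J where "J = sqrt (1+n\<^sup>2)"
  define D where "D = (n\<^sup>2-E)\<^sup>2+\<eta>\<^sup>2"
  have J: "J > 0" unfolding J_def by (simp add: add_pos_nonneg)
  have D: "D \<ge> \<eta>\<^sup>2" unfolding D_def by simp
  have M1: "M1 E \<tau> \<ge> 0" "M2 \<tau> \<ge> 0" unfolding M1_def M2_def by simp_all
  have "J powr \<tau> * (1+n) powr (4-\<tau>) \<le> (M1 E \<tau> + M2 \<tau>) * (1 + 1/\<eta>\<^sup>2) * D"
  proof (cases "n\<^sup>2 \<le> 2*E+2")
    case True
    have "J \<le> sqrt (3+2*E)" unfolding J_def using True by simp
    hence "J powr \<tau> \<le> sqrt (3+2*E) powr \<tau>" using J t by (intro powr_mono2) auto
    also have "sqrt (3+2*E) powr \<tau> = (3+2*E) powr (\<tau>/2)"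
    proof -
      have "sqrt (3+2*E) = (3+2*E) powr (1/2)" using powr_half_sqrt[of "3+2*E"] E by simp
      thus ?thesis by (simp add: powr_powr)
    qed
    finally have a: "J powr \<tau> \<le> (3+2*E) powr (\<tau>/2)" .
    have "n \<le> sqrt (2*E+2)" using True n real_le_rsqrt by simp
    hence b: "(1+n) powr (4-\<tau>) \<le> (1 + sqrt (2*E+2)) powr (4-\<tau>)" using n t by (intro powr_mono2) auto
    have "J powr \<tau> * (1+n) powr (4-\<tau>) \<le> M1 E \<tau>"
      unfolding M1_def using a b by (intro mult_mono) auto
    also have "M1 E \<tau> = M1 E \<tau> * (1/\<eta>\<^sup>2) * \<eta>\<^sup>2" using eta by simp
    also have "\<dots> \<le> (M1 E \<tau> + M2 \<tau>) * (1 + 1/\<eta>\<^sup>2) * D"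
    proof -
      have "M1 E \<tau> * (1/\<eta>\<^sup>2) \<le> (M1 E \<tau> + M2 \<tau>) * (1/\<eta>\<^sup>2)"
        using M1 by (intro mult_right_mono) auto
      also have "\<dots> \<le> (M1 E \<tau> + M2 \<tau>) * (1 + 1/\<eta>\<^sup>2)"
        using M1 by (intro mult_left_mono) auto
      finally have x: "M1 E \<tau> * (1/\<eta>\<^sup>2) \<le> (M1 E \<tau> + M2 \<tau>) * (1 + 1/\<eta>\<^sup>2)" .
      have y: "0 \<le> (M1 E \<tau> + M2 \<tau>) * (1 + 1/\<eta>\<^sup>2)" using M1 by simp
      show ?thesis using mult_mono[OF x D y] by simp
    qed
    finally show ?thesis .
  next
    case False
    have "(1+n)\<^sup>2 = 2*(1+n\<^sup>2) - (n-1)\<^sup>2" by (simp add: power2_eq_square algebra_simps)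
    moreover have "(n-1)\<^sup>2 \<ge> 0" by simp
    ultimately have "(1+n)\<^sup>2 \<le> 2*(1+n\<^sup>2)" by linarith
    hence "((1+n)\<^sup>2) powr ((4-\<tau>)/2) \<le> (2*(1+n\<^sup>2)) powr ((4-\<tau>)/2)" using t by (intro powr_mono2) auto
    also have "((1+n)\<^sup>2) powr ((4-\<tau>)/2) = (1+n) powr (4-\<tau>)"
    proof -
      have "(1+n)\<^sup>2 = (1+n) powr 2" using n by (simp add: powr_numeral)
      moreover have "2 * ((4-\<tau>)/2) = 4 - \<tau>" by simp
      ultimately show ?thesis by (simp only: powr_powr)
    qed
    also have "(2*(1+n\<^sup>2)) powr ((4-\<tau>)/2) = 2 powr ((4-\<tau>)/2) * J powr (4-\<tau>)"
    proof -
      have "(1+n\<^sup>2) = J powr 2" using J unfolding J_def by (simp add: powr_numeral add_nonneg_nonneg)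
      hence "(1+n\<^sup>2) powr ((4-\<tau>)/2) = (J powr 2) powr ((4-\<tau>)/2)" by (simp only:)
      also have "\<dots> = J powr (2*((4-\<tau>)/2))" by (simp only: powr_powr)
      also have "2*((4-\<tau>)/2) = 4-\<tau>" by simp
      finally have "(1+n\<^sup>2) powr ((4-\<tau>)/2) = J powr (4-\<tau>)" .
      moreover have "(2*(1+n\<^sup>2)) powr ((4-\<tau>)/2) = 2 powr ((4-\<tau>)/2) * (1+n\<^sup>2) powr ((4-\<tau>)/2)"
        by (rule powr_mult)
      ultimately show ?thesis by (simp only:)
    qed
    finally have c: "(1+n) powr (4-\<tau>) \<le> 2 powr ((4-\<tau>)/2) * J powr (4-\<tau>)" .
    have "J powr \<tau> * (1+n) powr (4-\<tau>) \<le> J powr \<tau> * (2 powr ((4-\<tau>)/2) * J powr (4-\<tau>))"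
      using c by (intro mult_left_mono) auto
    also have "\<dots> = 2 powr ((4-\<tau>)/2) * (J powr \<tau> * J powr (4-\<tau>))" by simp
    also have "J powr \<tau> * J powr (4-\<tau>) = (1+n\<^sup>2)\<^sup>2"
    proof -
      have "J powr \<tau> * J powr (4-\<tau>) = J powr 4" using powr_add[of J \<tau> "4-\<tau>"] by simp
      also have "\<dots> = J ^ 4" using J by (simp add: powr_numeral)
      also have "\<dots> = (J\<^sup>2)\<^sup>2" by simp
      finally show ?thesis unfolding J_def by (simp add: add_nonneg_nonneg)
    qed
    also have "(1+n\<^sup>2)\<^sup>2 \<le> 4 * D"
    proof -
      have "n\<^sup>2 - E \<ge> (1+n\<^sup>2)/2" using False by simp
      hence "((1+n\<^sup>2)/2)\<^sup>2 \<le> (n\<^sup>2 - E)\<^sup>2" by (intro power_mono) (auto simp: add_nonneg_nonneg)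
      hence "(1+n\<^sup>2)\<^sup>2 \<le> 4 * (n\<^sup>2 - E)\<^sup>2" by (simp add: power_divide)
      moreover have "0 \<le> 4 * \<eta>\<^sup>2" by simp
      ultimately show ?thesis unfolding D_def distrib_left by linarith
    qed
    finally have "J powr \<tau> * (1+n) powr (4-\<tau>) \<le> 2 powr ((4-\<tau>)/2) * (4 * D)"
      by (simp add: mult_left_mono)
    hence "J powr \<tau> * (1+n) powr (4-\<tau>) \<le> M2 \<tau> * D"
      unfolding M2_def by (simp add: mult.assoc mult.left_commute)
    also have "\<dots> \<le> (M1 E \<tau> + M2 \<tau>) * (1 + 1/\<eta>\<^sup>2) * D"
    proof -
      have "(M1 E \<tau> + M2 \<tau>) * (1 + 1/\<eta>\<^sup>2) = (M1 E \<tau> + M2 \<tau>) + (M1 E \<tau> + M2 \<tau>) * (1/\<eta>\<^sup>2)"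
        by (simp add: distrib_left)
      moreover have "(M1 E \<tau> + M2 \<tau>) * (1/\<eta>\<^sup>2) \<ge> 0" using M1 by simp
      ultimately have "M2 \<tau> \<le> (M1 E \<tau> + M2 \<tau>) * (1 + 1/\<eta>\<^sup>2)"
        using M1 by linarith
      moreover have "D \<ge> 0" using D zero_le_power2[of \<eta>] by linarith
      ultimately show ?thesis by (rule mult_right_mono)
    qed
    finally show ?thesis .
  qed
  thus ?thesis unfolding J_def D_def .
qed


lemma ptwise:
  fixes a :: "real^'n"
  assumes E: "E > 0" and t: "0 \<le> \<tau>" "\<tau> < 4" and eta: "\<eta> > 0"
  shows "integrand22 E \<tau> \<eta> a \<le> (M1 E \<tau> + M2 \<tau>) * (1 + 1/\<eta>\<^sup>2) *
           (\<Prod>i\<in>UNIV. (1 + \<bar>a$i\<bar>) powr (-((4-\<tau>)/CARD('n))))"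
proof -
  define n where "n = norm a"
  define p where "p = (4-\<tau>)/CARD('n)"
  define K where "K = (M1 E \<tau> + M2 \<tau>) * (1 + 1/\<eta>\<^sup>2)"
  define Dn where "Dn = (n\<^sup>2-E)\<^sup>2+\<eta>\<^sup>2"
  have n: "n \<ge> 0" unfolding n_def by simp
  have Dn: "Dn > 0" unfolding Dn_def using eta by (simp add: add_nonneg_pos)
  have "integrand22 E \<tau> \<eta> a = sqrt (1+n\<^sup>2) powr \<tau> / Dn"
    unfolding integrand22_def jbr_def cmod_eq n_def Dn_def by simp
  also have "\<dots> \<le> K * (1+n) powr (-(4-\<tau>))"
  proof -
    have k: "sqrt (1+n\<^sup>2) powr \<tau> * (1+n) powr (4-\<tau>) \<le> K * Dn"
      using key[OF n E t eta] unfolding K_def Dn_def .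
    have pos: "(1+n) powr (4-\<tau>) > 0" using n by simp
    have "sqrt (1+n\<^sup>2) powr \<tau> \<le> K * Dn / (1+n) powr (4-\<tau>)"
      using k pos by (simp add: pos_le_divide_eq)
    hence "sqrt (1+n\<^sup>2) powr \<tau> / Dn \<le> K / (1+n) powr (4-\<tau>)"
      using Dn pos by (simp add: pos_divide_le_eq field_simps)
    moreover have "K / (1+n) powr (4-\<tau>) = K * (1+n) powr (-(4-\<tau>))"
      by (simp only: powr_minus_divide) simp
    ultimately show ?thesis by (simp only:)
  qed
  also have "(1+n) powr (-(4-\<tau>)) \<le> (\<Prod>i\<in>UNIV. (1 + \<bar>a$i\<bar>) powr (-p))"
  proof -
    have "(1+n) powr (-(4-\<tau>)) = ((1+n) powr (-p)) ^ CARD('n)"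
      using n by (simp add: powr_power p_def)
    also have "\<dots> = (\<Prod>i\<in>(UNIV::'n set). (1+n) powr (-p))" by simp
    also have "\<dots> \<le> (\<Prod>i\<in>UNIV. (1 + \<bar>a$i\<bar>) powr (-p))"
    proof (rule prod_mono)
      fix i :: 'n
      have "p \<ge> 0" unfolding p_def using t by simp
      moreover have "\<bar>a$i\<bar> \<le> n" unfolding n_def by (rule component_le_norm_cart)
      ultimately show "0 \<le> (1+n) powr (-p) \<and> (1+n) powr (-p) \<le> (1 + \<bar>a$i\<bar>) powr (-p)"
        by (auto intro: powr_mono2')
    qed
    finally show ?thesis .
  qed
  hence "K * (1+n) powr (-(4-\<tau>)) \<le> K * (\<Prod>i\<in>UNIV. (1 + \<bar>a$i\<bar>) powr (-p))"
    unfolding K_def by (intro mult_left_mono) (auto simp: M1_def M2_def)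
  finally show ?thesis unfolding K_def p_def .
qed


definition CC :: "nat \<Rightarrow> real \<Rightarrow> real \<Rightarrow> real" where
  "CC d E \<tau> = (M1 E \<tau> + M2 \<tau>) * (1 + 2/((4-\<tau>)/d - 1)) ^ d"

lemma M1_mono: "0 < E \<Longrightarrow> E \<le> b \<Longrightarrow> 0 \<le> \<tau> \<Longrightarrow> \<tau> < 4 \<Longrightarrow> M1 E \<tau> \<le> M1 b \<tau>"
  unfolding M1_def
  by (intro mult_mono powr_mono2) auto

theorem lemma22:
  fixes dummy :: "'n::finite itself"
  assumes "CARD('n) \<le> 3"
  shows "\<exists>C :: real \<Rightarrow> real \<Rightarrow> real.
     (\<forall>\<tau>\<in>{0..<4 - real CARD('n)}. \<forall>K. compact K \<and> K \<subseteq> {0<..} \<longrightarrow>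
         bdd_above ((\<lambda>E. C E \<tau>) ` K)) \<and>
     (\<forall>E>0. \<forall>\<tau>\<in>{0..<4 - real CARD('n)}. \<forall>L::real. L \<ge> 1 \<longrightarrow> (\<forall>\<eta>>0.
         (\<lambda>k::int^'n. integrand22 E \<tau> \<eta> (dual_pt L k)) summable_on UNIV \<and>
         (1 / L ^ CARD('n)) * (\<Sum>\<^sub>\<infinity>k::int^'n. integrand22 E \<tau> \<eta> (dual_pt L k))
            \<le> C E \<tau> * (1 + 1 / \<eta>\<^sup>2)))"
proof (intro exI[of _ "CC CARD('n)"] conjI ballI allI impI)
  have d1: "CARD('n) \<ge> 1" by (simp add: Suc_leI)
  fix \<tau> :: real assume t: "\<tau> \<in> {0..<4 - real CARD('n)}"
  define p where "p = (4-\<tau>)/CARD('n)"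
  have p: "p > 1" unfolding p_def using t d1 by (simp add: field_simps)
  have t4: "0 \<le> \<tau>" "\<tau> < 4" using t d1 by auto
  have B: "0 \<le> 1 + 2/(p-1)" using p by simp
  {
    fix K :: "real set" assume K: "compact K \<and> K \<subseteq> {0<..}"
    obtain b where b: "\<forall>x\<in>K. \<bar>x\<bar> \<le> b" using compact_imp_bounded[of K] K bounded_real by auto
    show "bdd_above ((\<lambda>E. CC CARD('n) E \<tau>) ` K)"
    proof (rule bdd_aboveI2)
      fix E assume E: "E \<in> K"
      hence E0: "E > 0" "E \<le> b" using K b by auto
      have "M1 E \<tau> \<le> M1 b \<tau>" using M1_mono[OF E0 t4] .
      thus "CC CARD('n) E \<tau> \<le> CC CARD('n) b \<tau>"
        unfolding CC_def p_def[symmetric] using B by (intro mult_right_mono) auto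
    qed
  }
  fix E :: real and L :: real and \<eta> :: real
  assume E: "E > 0" and L: "L \<ge> 1" and eta: "\<eta> > 0"
  define g where "g = (\<lambda>k::int^'n. integrand22 E \<tau> \<eta> (dual_pt L k))"
  define K' where "K' = (M1 E \<tau> + M2 \<tau>) * (1 + 1/\<eta>\<^sup>2)"
  define Bd where "Bd = 1 + 2/(p-1)"
  have K': "K' \<ge> 0" unfolding K'_def M1_def M2_def by simp
  have gnn: "g k \<ge> 0" for k unfolding g_def integrand22_def by simp
  have gle: "g k \<le> K' * (\<Prod>i\<in>UNIV. psi L p (k$i))" for k
  proof -
    have "g k \<le> K' * (\<Prod>i\<in>UNIV. (1 + \<bar>dual_pt L k $ i\<bar>) powr (-p))"
      unfolding g_def K'_def p_def using ptwise[OF E t4 eta] .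
    also have "(\<Prod>i\<in>UNIV. (1 + \<bar>dual_pt L k $ i\<bar>) powr (-p)) = (\<Prod>i\<in>UNIV. psi L p (k$i))"
      using L by (simp add: dual_pt_def psi_def abs_divide)
    finally show ?thesis .
  qed
  have fin: "sum g F \<le> K' * (L * Bd) ^ CARD('n)" if F: "finite F" for F
  proof -
    obtain N :: nat where N: "F \<subseteq> {k. \<forall>i. k$i \<in> {-int N..int N}}" using in_box[OF F] by blast
    have "sum g F \<le> sum g {k::int^'n. \<forall>i. k$i \<in> {-int N..int N}}"
      by (rule sum_mono2[OF box_finite N]) (auto simp: gnn)
    also have "\<dots> \<le> (\<Sum>k\<in>{k::int^'n. \<forall>i. k$i \<in> {-int N..int N}}. K' * (\<Prod>i\<in>UNIV. psi L p (k$i)))"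
      by (rule sum_mono) (rule gle)
    also have "\<dots> = K' * (\<Sum>j\<in>{-int N..int N}. psi L p j) ^ CARD('n)"
      by (simp only: sum_distrib_left[symmetric] box_sum[OF finite_atLeastAtMost_int])
    also have "\<dots> \<le> K' * (L * Bd) ^ CARD('n)"
      using oneD[OF L p, of N] K' unfolding Bd_def
      by (intro mult_left_mono power_mono) (auto intro: sum_nonneg simp: psi_def)
    finally show ?thesis .
  qed
  have summ: "g summable_on UNIV"
    by (rule nonneg_bdd_above_summable_on) (auto simp: gnn intro!: bdd_aboveI2 fin)
  have inf: "infsum g UNIV \<le> K' * (L * Bd) ^ CARD('n)"
    by (rule infsum_le_finite_sums[OF summ]) (rule fin)
  show "(\<lambda>k::int^'n. integrand22 E \<tau> \<eta> (dual_pt L k)) summable_on UNIV"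
    using summ unfolding g_def .
  have Lp: "L ^ CARD('n) > 0" using L by simp
  have "(1 / L ^ CARD('n)) * infsum g UNIV \<le> (1 / L ^ CARD('n)) * (K' * (L * Bd) ^ CARD('n))"
    using inf Lp by (intro mult_left_mono) auto
  also have "\<dots> = K' * Bd ^ CARD('n)" using Lp L by (simp add: power_mult_distrib)
  also have "\<dots> = CC CARD('n) E \<tau> * (1 + 1 / \<eta>\<^sup>2)"
    unfolding K'_def Bd_def CC_def p_def by simp
  finally show "(1 / L ^ CARD('n)) * (\<Sum>\<^sub>\<infinity>k::int^'n. integrand22 E \<tau> \<eta> (dual_pt L k))
            \<le> CC CARD('n) E \<tau> * (1 + 1 / \<eta>\<^sup>2)" unfolding g_def .
qed

end
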